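(* Let $q \geq 1$ and $n \geq 5$ be integers. Let $G_{n} := (\mathbb{Z}/2\mathbb{Z})^{qn} \times (\mathbb{Z}/4\mathbb{Z})^{qn}$ and $H_{n} := (\mathbb{Z}/2\mathbb{Z})^{q(n-2)} \times (\mathbb{Z}/4\mathbb{Z})^{q(n+1)}$. Then Duplicator has a winning strategy in the $q$-ary count-free pebble game on $(G_n, H_n)$ with $qn/4$ pebble pairs.
   Context: The $q$-ary count-free $m$-pebble game on finite groups $G, H$ is played by Spoiler and Duplicator with $m$ pebble pairs $(p_i, p_i')$. If $|G| \neq |H|$, Spoiler wins immediately. Each round proceeds as follows: (1) Spoiler picks up $d$ pebble pairs, where $1 \le d \le q$; (2) the winning condition is checked; (3) Spoiler places the $d$ chosen pebbles from one side on $d$ elements of one of the groups (of his choice), and then Duplicator places the corresponding partner pebbles on $d$ elements of the other group. Winning condition: if $g_1, \ldots, g_m$ are the pebbled elements of $G$ and $h_1, \ldots, h_m$ the corresponding pebbled elements of $H$, Spoiler wins if the map $g_i \mapsto h_i$ does not extend to an isomorphism $\langle g_1, \ldots, g_m\rangle \to \langle h_1, \ldots, h_m\rangle$; otherwise play continues. Duplicator has a winning strategy if she can prevent Spoiler from ever winning, for any number of rounds. *)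

theory Defs
  imports "HOL-Algebra.Algebra"
begin

definition Z2Z4_group :: "nat \<Rightarrow> nat \<Rightarrow> (nat \<Rightarrow> int) monoid" where
  "Z2Z4_group a b = product_group {..<a+b} (\<lambda>i. integer_mod_group (if i < a then 2 else 4))"

(* A position of the m-pebble game: pebble pair i is either off the board (None) or
   placed with p_i on g and p_i' on h (Some (g, h)). *)
type_synonym ('a, 'b) pebble_pos = "nat \<Rightarrow> ('a \<times> 'b) option"

definition pebble_partial_iso ::
  "('a, 'c) monoid_scheme \<Rightarrow> ('b, 'd) monoid_scheme \<Rightarrow> ('a, 'b) pebble_pos \<Rightarrow> bool" where
  "pebble_partial_iso G H p =
    (let I = {i. p i \<noteq> None};
         g = (\<lambda>i. fst (the (p i)));
         h = (\<lambda>i. snd (the (p i)))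
     in \<exists>\<phi>. \<phi> \<in> iso (subgroup_generated G (g ` I)) (subgroup_generated H (h ` I))
            \<and> (\<forall>i\<in>I. \<phi> (g i) = h i))"

definition pick_up :: "('a, 'b) pebble_pos \<Rightarrow> nat set \<Rightarrow> ('a, 'b) pebble_pos" where
  "pick_up p D = (\<lambda>i. if i \<in> D then None else p i)"

definition place :: "('a, 'b) pebble_pos \<Rightarrow> nat set \<Rightarrow> (nat \<Rightarrow> 'a) \<Rightarrow> (nat \<Rightarrow> 'b) \<Rightarrow> ('a, 'b) pebble_pos" where
  "place p D a b = (\<lambda>i. if i \<in> D then Some (a i, b i) else p i)"

definition dup_invariant ::
  "nat \<Rightarrow> nat \<Rightarrow> ('a, 'c) monoid_scheme \<Rightarrow> ('b, 'd) monoid_scheme \<Rightarrow> ('a, 'b) pebble_pos set \<Rightarrow> bool" where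
  "dup_invariant q m G H S =
    (\<forall>p\<in>S. \<forall>D. D \<subseteq> {..<m} \<and> 1 \<le> card D \<and> card D \<le> q \<longrightarrow>
       pebble_partial_iso G H (pick_up p D)
       \<and> (\<forall>a. (\<forall>i\<in>D. a i \<in> carrier G) \<longrightarrow>
              (\<exists>b. (\<forall>i\<in>D. b i \<in> carrier H) \<and> place p D a b \<in> S))
       \<and> (\<forall>b. (\<forall>i\<in>D. b i \<in> carrier H) \<longrightarrow>
              (\<exists>a. (\<forall>i\<in>D. a i \<in> carrier G) \<and> place p D a b \<in> S)))"

(* Duplicator has a winning strategy in the q-ary count-free m-pebble game on (G, H):
   the groups have the same order (otherwise Spoiler wins immediately) and the initial
   position (no pebbles on the board) lies in some Duplicator-invariant set of positions. *)
definition duplicator_wins ::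
  "nat \<Rightarrow> nat \<Rightarrow> ('a, 'c) monoid_scheme \<Rightarrow> ('b, 'd) monoid_scheme \<Rightarrow> bool" where
  "duplicator_wins q m G H =
    (card (carrier G) = card (carrier H)
     \<and> (\<exists>S. (\<lambda>_. None) \<in> S \<and> dup_invariant q m G H S))"

end

theory Submission
  imports Defs
begin

definition PG :: "nat set \<Rightarrow> (nat \<Rightarrow> nat) \<Rightarrow> (nat \<Rightarrow> int) monoid" where
  "PG I k = product_group I (\<lambda>i. integer_mod_group (k i))"

definition kpos :: "nat set \<Rightarrow> (nat \<Rightarrow> nat) \<Rightarrow> bool" where
  "kpos I k = (\<forall>i\<in>I. 0 < k i)"

lemma carrier_PG: "kpos I k \<Longrightarrow> carrier (PG I k) = (\<Pi>\<^sub>E i\<in>I. {0..<int (k i)})"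
  unfolding PG_def kpos_def by (auto simp: carrier_integer_mod_group intro!: PiE_cong)

lemma mult_PG: "monoid.mult (PG I k) = (\<lambda>x y. \<lambda>i\<in>I. (x i + y i) mod int (k i))"
  unfolding PG_def by simp

lemma group_PG: "group (PG I k)"
  unfolding PG_def by simp

lemma mem_PG: "kpos I k \<Longrightarrow> x \<in> carrier (PG I k) \<longleftrightarrow> (\<forall>i\<in>I. 0 \<le> x i \<and> x i < int (k i)) \<and> (\<forall>i. i \<notin> I \<longrightarrow> x i = undefined)"
  by (auto simp: carrier_PG PiE_iff extensional_def)

definition shear :: "nat set \<Rightarrow> (nat \<Rightarrow> nat) \<Rightarrow> nat \<Rightarrow> (nat \<Rightarrow> int) \<Rightarrow> (nat \<Rightarrow> int) \<Rightarrow> (nat \<Rightarrow> int)" where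
  "shear I k t c x = (\<lambda>s\<in>I. if s = t then x t else (x s + c s * x t) mod int (k s))"

lemma mod_mult_dvd_aux:
  fixes a c kt ks :: int
  assumes "ks dvd c * kt"
  shows "(c * (a mod kt)) mod ks = (c * a) mod ks"
proof -
  obtain e where e: "c * kt = ks * e" using assms by (auto elim: dvdE)
  have "a = a mod kt + kt * (a div kt)" by simp
  then have "c * a = c * (a mod kt) + (c * kt) * (a div kt)"
    by (metis distrib_left mult.assoc)
  also have "\<dots> = c * (a mod kt) + ks * (e * (a div kt))" using e by (simp add: mult.assoc)
  finally have "(c * a) mod ks = (c * (a mod kt) + ks * (e * (a div kt))) mod ks" by simp
  also have "\<dots> = (c * (a mod kt)) mod ks" by simp
  finally show ?thesis by simp
qed

lemma shear_carrier:
  assumes "kpos I k" "x \<in> carrier (PG I k)" "t \<in> I"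
  shows "shear I k t c x \<in> carrier (PG I k)"
  using assms unfolding mem_PG[OF assms(1)] shear_def kpos_def by auto

lemma shear_inv:
  assumes "kpos I k" "x \<in> carrier (PG I k)" "t \<in> I"
  shows "shear I k t (\<lambda>s. - c s) (shear I k t c x) = x"
proof
  fix s
  show "shear I k t (\<lambda>s. - c s) (shear I k t c x) s = x s"
  proof (cases "s \<in> I")
    case False then show ?thesis using assms unfolding mem_PG[OF assms(1)] shear_def by auto
  next
    case True
    have xs: "0 \<le> x s" "x s < int (k s)" using assms True unfolding mem_PG[OF assms(1)] by auto
    show ?thesis
    proof (cases "s = t")
      case True then show ?thesis using \<open>s\<in>I\<close> assms by (simp add: shear_def)
    next
      case False
      have "shear I k t (\<lambda>s. - c s) (shear I k t c x) s = ((x s + c s * x t) mod int (k s) + - c s * x t) mod int (k s)"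
        using \<open>s \<in> I\<close> False assms(3) by (simp add: shear_def)
      also have "\<dots> = x s" using xs by (simp add: mod_diff_left_eq)
      finally show ?thesis .
    qed
  qed
qed

lemma shear_hom:
  assumes "kpos I k" "t \<in> I" "\<And>s. s \<in> I \<Longrightarrow> s \<noteq> t \<Longrightarrow> int (k s) dvd c s * int (k t)"
  shows "shear I k t c \<in> hom (PG I k) (PG I k)"
proof (rule homI)
  fix x assume "x \<in> carrier (PG I k)"
  then show "shear I k t c x \<in> carrier (PG I k)" using shear_carrier assms by blast
next
  fix x y assume x: "x \<in> carrier (PG I k)" and y: "y \<in> carrier (PG I k)"
  show "shear I k t c (x \<otimes>\<^bsub>PG I k\<^esub> y) = shear I k t c x \<otimes>\<^bsub>PG I k\<^esub> shear I k t c y"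
  proof
    fix s
    show "shear I k t c (x \<otimes>\<^bsub>PG I k\<^esub> y) s = (shear I k t c x \<otimes>\<^bsub>PG I k\<^esub> shear I k t c y) s"
    proof (cases "s \<in> I")
      case False then show ?thesis by (simp add: shear_def mult_PG)
    next
      case True
      show ?thesis
      proof (cases "s = t")
        case True then show ?thesis using assms(2) by (simp add: shear_def mult_PG)
      next
        case False
        have d: "int (k s) dvd c s * int (k t)" using assms(3) \<open>s\<in>I\<close> False by blast
        have "shear I k t c (x \<otimes>\<^bsub>PG I k\<^esub> y) s = ((x s + y s) mod int (k s) + c s * ((x t + y t) mod int (k t))) mod int (k s)"
          using \<open>s\<in>I\<close> False assms(2) by (simp add: shear_def mult_PG)
        also have "\<dots> = ((x s + y s) + c s * ((x t + y t) mod int (k t))) mod int (k s)"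
          by (simp add: mod_add_left_eq)
        also have "\<dots> = ((x s + y s) + (c s * ((x t + y t) mod int (k t))) mod int (k s)) mod int (k s)"
          by (simp add: mod_add_right_eq)
        also have "\<dots> = ((x s + y s) + (c s * (x t + y t)) mod int (k s)) mod int (k s)"
          by (simp only: mod_mult_dvd_aux[OF d])
        also have "\<dots> = ((x s + y s) + c s * (x t + y t)) mod int (k s)"
          by (simp add: mod_add_right_eq)
        also have "\<dots> = ((x s + c s * x t) mod int (k s) + (y s + c s * y t) mod int (k s)) mod int (k s)"
          by (simp add: mod_add_eq algebra_simps)
        also have "\<dots> = (shear I k t c x \<otimes>\<^bsub>PG I k\<^esub> shear I k t c y) s"
          using \<open>s\<in>I\<close> False assms(2) by (simp add: shear_def mult_PG)
        finally show ?thesis .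
      qed
    qed
  qed
qed

lemma shear_iso:
  assumes "kpos I k" "t \<in> I" "\<And>s. s \<in> I \<Longrightarrow> s \<noteq> t \<Longrightarrow> int (k s) dvd c s * int (k t)"
  shows "shear I k t c \<in> iso (PG I k) (PG I k)"
proof -
  have h2: "shear I k t (\<lambda>s. - c s) \<in> hom (PG I k) (PG I k)"
    by (rule shear_hom[OF assms(1,2)]) (use assms(3) in auto)
  have "group_isomorphisms (PG I k) (PG I k) (shear I k t c) (shear I k t (\<lambda>s. - c s))"
    unfolding group_isomorphisms_def
    using shear_hom[OF assms] h2 shear_inv[OF assms(1) _ assms(2)]
      shear_inv[OF assms(1) _ assms(2), of _ "\<lambda>s. - c s"] by auto
  then show ?thesis by (rule group_isomorphisms_imp_iso)
qed

definition tr :: "nat set \<Rightarrow> nat set \<Rightarrow> (nat \<Rightarrow> nat) \<Rightarrow> (nat \<Rightarrow> int) \<Rightarrow> (nat \<Rightarrow> int)" where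
  "tr C J \<pi> x = (\<lambda>j\<in>J. if j \<in> \<pi> ` C then x (inv_into C \<pi> j) else 0)"

definition inside :: "nat set \<Rightarrow> (nat \<Rightarrow> nat) \<Rightarrow> nat set \<Rightarrow> ((nat \<Rightarrow> int) \<Rightarrow> (nat \<Rightarrow> int)) \<Rightarrow> bool" where
  "inside I k C \<theta> = (\<theta> \<in> iso (PG I k) (PG I k)
     \<and> (\<forall>x\<in>carrier (PG I k). (\<forall>s\<in>C. x s = 0) \<longrightarrow> \<theta> x = x)
     \<and> (\<forall>x\<in>carrier (PG I k). \<forall>s\<in>I-C. \<theta> x s = x s)
     \<and> (\<forall>J k' \<pi>. inj_on \<pi> C \<and> \<pi> ` C \<subseteq> J \<and> (\<forall>s\<in>C. k' (\<pi> s) = k s) \<and> kpos J k' \<longrightarrow>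
          (\<exists>\<theta>'. \<theta>' \<in> iso (PG J k') (PG J k') \<and> (\<forall>x\<in>carrier (PG I k). \<theta>' (tr C J \<pi> x) = tr C J \<pi> (\<theta> x)))))"

lemma inside_id: "inside I k C (\<lambda>x. x)"
  unfolding inside_def using iso_set_refl by blast

lemma iso_carrier: "f \<in> iso G H \<Longrightarrow> x \<in> carrier G \<Longrightarrow> f x \<in> carrier H"
  by (auto simp: iso_def hom_def)

lemma inside_comp:
  assumes "inside I k C \<theta>1" "inside I k C \<theta>0"
  shows "inside I k C (\<theta>1 \<circ> \<theta>0)"
proof -
  have i0: "\<theta>0 \<in> iso (PG I k) (PG I k)" and i1: "\<theta>1 \<in> iso (PG I k) (PG I k)"
    using assms unfolding inside_def by auto
  have c0: "\<And>x. x \<in> carrier (PG I k) \<Longrightarrow> \<theta>0 x \<in> carrier (PG I k)" using iso_carrier[OF i0] .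
  show ?thesis
    unfolding inside_def
  proof (intro conjI ballI allI impI)
    show "\<theta>1 \<circ> \<theta>0 \<in> iso (PG I k) (PG I k)" using iso_set_trans[OF i0 i1] .
  next
    fix x assume "x \<in> carrier (PG I k)" "\<forall>s\<in>C. x s = 0"
    then show "(\<theta>1 \<circ> \<theta>0) x = x" using assms unfolding inside_def by auto
  next
    fix x s assume "x \<in> carrier (PG I k)" "s \<in> I - C"
    then show "(\<theta>1 \<circ> \<theta>0) x s = x s" using assms c0 unfolding inside_def by auto
  next
    fix J k' \<pi> assume h: "inj_on \<pi> C \<and> \<pi> ` C \<subseteq> J \<and> (\<forall>s\<in>C. k' (\<pi> s) = k s) \<and> kpos J k'"
    obtain a where a: "a \<in> iso (PG J k') (PG J k')" "\<forall>x\<in>carrier (PG I k). a (tr C J \<pi> x) = tr C J \<pi> (\<theta>0 x)"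
      using assms(2) h unfolding inside_def by meson
    obtain b where b: "b \<in> iso (PG J k') (PG J k')" "\<forall>x\<in>carrier (PG I k). b (tr C J \<pi> x) = tr C J \<pi> (\<theta>1 x)"
      using assms(1) h unfolding inside_def by meson
    show "\<exists>\<theta>'. \<theta>' \<in> iso (PG J k') (PG J k') \<and> (\<forall>x\<in>carrier (PG I k). \<theta>' (tr C J \<pi> x) = tr C J \<pi> ((\<theta>1 \<circ> \<theta>0) x))"
      by (rule exI[of _ "b \<circ> a"]) (use iso_set_trans[OF a(1) b(1)] a(2) b(2) c0 in auto)
  qed
qed

lemma shear_inside:
  assumes kp: "kpos I k" and tC: "t \<in> C" and CI: "C \<subseteq> I"
    and c0: "\<And>s. s \<notin> C \<Longrightarrow> c s = 0"
    and dv: "\<And>s. s \<in> I \<Longrightarrow> s \<noteq> t \<Longrightarrow> int (k s) dvd c s * int (k t)"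
  shows "inside I k C (shear I k t c)"
  unfolding inside_def
proof (intro conjI ballI allI impI)
  have tI: "t \<in> I" using tC CI by blast
  show "shear I k t c \<in> iso (PG I k) (PG I k)" using shear_iso[OF kp tI dv] .
next
  fix x assume x: "x \<in> carrier (PG I k)" "\<forall>s\<in>C. x s = 0"
  show "shear I k t c x = x"
  proof
    fix s show "shear I k t c x s = x s"
      using x tC mem_PG[OF kp, of x] by (auto simp: shear_def)
  qed
next
  fix x s assume x: "x \<in> carrier (PG I k)" "s \<in> I - C"
  then show "shear I k t c x s = x s"
    using tC c0[of s] mem_PG[OF kp, of x] by (auto simp: shear_def)
next
  fix J k' \<pi> assume h: "inj_on \<pi> C \<and> \<pi> ` C \<subseteq> J \<and> (\<forall>s\<in>C. k' (\<pi> s) = k s) \<and> kpos J k'"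
  define c' where "c' j = (if j \<in> \<pi> ` C then c (inv_into C \<pi> j) else 0)" for j
  have ptJ: "\<pi> t \<in> J" using h tC by blast
  have dv': "int (k' j) dvd c' j * int (k' (\<pi> t))" if "j \<in> J" "j \<noteq> \<pi> t" for j
  proof (cases "j \<in> \<pi> ` C")
    case True
    then obtain s where s: "s \<in> C" "j = \<pi> s" by blast
    have "inv_into C \<pi> j = s" using s h by (simp add: inv_into_f_f)
    moreover have "s \<noteq> t" using s that by blast
    ultimately show ?thesis using s h tC dv[of s] CI unfolding c'_def by auto
  qed (simp add: c'_def)
  show "\<exists>\<theta>'. \<theta>' \<in> iso (PG J k') (PG J k') \<and> (\<forall>x\<in>carrier (PG I k). \<theta>' (tr C J \<pi> x) = tr C J \<pi> (shear I k t c x))"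
  proof (intro exI conjI ballI)
    show "shear J k' (\<pi> t) c' \<in> iso (PG J k') (PG J k')"
      using shear_iso[of J k' "\<pi> t" c'] h ptJ dv' by blast
  next
    fix x assume x: "x \<in> carrier (PG I k)"
    show "shear J k' (\<pi> t) c' (tr C J \<pi> x) = tr C J \<pi> (shear I k t c x)"
    proof
      fix j
      have invt: "inv_into C \<pi> (\<pi> t) = t" using h tC by (simp add: inv_into_f_f)
      show "shear J k' (\<pi> t) c' (tr C J \<pi> x) j = tr C J \<pi> (shear I k t c x) j"
      proof (cases "j \<in> J")
        case False then show ?thesis by (simp add: shear_def tr_def)
      next
        case jJ: True
        show ?thesis
        proof (cases "j \<in> \<pi> ` C")
          case True
          then obtain s where s: "s \<in> C" "j = \<pi> s" by blast
          have invs: "inv_into C \<pi> j = s" using s h by (simp add: inv_into_f_f)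
          have sI: "s \<in> I" using s CI by blast
          show ?thesis
          proof (cases "s = t")
            case True then show ?thesis using s jJ invs invt tC ptJ sI by (simp add: shear_def tr_def)
          next
            case False
            then have "j \<noteq> \<pi> t" using s h tC by (metis inv_into_f_f)
            then show ?thesis using s jJ invs invt tC ptJ sI False h
              by (simp add: shear_def tr_def c'_def)
          qed
        next
          case False
          then have "j \<noteq> \<pi> t" using tC by blast
          then show ?thesis using False jJ by (simp add: shear_def tr_def c'_def)
        qed
      qed
    qed
  qed
qed

definition k24 :: "nat set \<Rightarrow> (nat \<Rightarrow> nat) \<Rightarrow> bool" where
  "k24 I k = (\<forall>i\<in>I. k i = 2 \<or> k i = 4)"

lemma k24_kpos: "k24 I k \<Longrightarrow> kpos I k"
  unfolding k24_def kpos_def by auto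

lemma k24_dvd4: "k24 I k \<Longrightarrow> s \<in> I \<Longrightarrow> int (k s) dvd 4"
  unfolding k24_def by auto

lemma NF1:
  assumes k: "k24 I k" and CC: "C' \<subseteq> C" "C \<subseteq> I" and z: "z \<in> carrier (PG I k)"
  shows "\<exists>\<theta> U. inside I k C \<theta> \<and> inside I k C' \<theta> \<and> U \<subseteq> C' \<and> card U \<le> 1 \<and> (\<forall>s\<in>C'-U. \<theta> z s = 0)"
proof -
  have kp: "kpos I k" using k24_kpos[OF k] .
  have zr: "\<And>s. s \<in> I \<Longrightarrow> 0 \<le> z s \<and> z s < int (k s)" using z mem_PG[OF kp] by auto
  have d4: "\<And>s. s \<in> I \<Longrightarrow> int (k s) dvd 4" using k24_dvd4[OF k] .
  have C'I: "C' \<subseteq> I" using CC by blast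
  have sh: "inside I k C (shear I k t c) \<and> inside I k C' (shear I k t c)"
    if "t \<in> C'" "\<And>s. s \<notin> C' \<Longrightarrow> c s = 0"
       "\<And>s. s \<in> I \<Longrightarrow> s \<noteq> t \<Longrightarrow> int (k s) dvd c s * int (k t)" for t c
    using shear_inside[OF kp _ CC(2), of t c] shear_inside[OF kp _ C'I, of t c] that CC by blast
  show ?thesis
  proof (cases "\<exists>t\<in>C'. k t = 4 \<and> odd (z t)")
    case True
    then obtain t where t: "t \<in> C'" "k t = 4" "odd (z t)" by blast
    define c where "c s = (if s \<in> C' \<and> s \<noteq> t then - (z s * z t) else 0)" for s
    have tI: "t \<in> I" using t C'I by blast
    have "z t = 1 \<or> z t = 3"
    proof -
      obtain m where m: "z t = 2 * m + 1" using t(3) by (auto elim: oddE)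
      then show ?thesis using zr[OF tI] t(2) by auto
    qed
    then have d: "4 dvd 1 - z t * z t" by auto
    have "\<forall>s\<in>C'-{t}. shear I k t c z s = 0"
    proof
      fix s assume s: "s \<in> C' - {t}"
      have sI: "s \<in> I" using s C'I by blast
      have "z s + - (z s * z t) * z t = z s * (1 - z t * z t)" by (simp add: algebra_simps)
      moreover have "int (k s) dvd z s * (1 - z t * z t)"
        using dvd_trans[OF d4[OF sI] d] by simp
      ultimately show "shear I k t c z s = 0" using s sI by (simp add: shear_def c_def)
    qed
    moreover have "inside I k C (shear I k t c) \<and> inside I k C' (shear I k t c)"
      by (rule sh[OF t(1)]) (auto simp: c_def t(2) intro!: dvd_mult d4)
    ultimately show ?thesis using t(1) by (intro exI[of _ "shear I k t c"] exI[of _ "{t}"]) auto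
  next
    case notA: False
    show ?thesis
    proof (cases "\<exists>t\<in>C'. k t = 2 \<and> z t = 1")
      case True
      then obtain t where t: "t \<in> C'" "k t = 2" "z t = 1" by blast
      define c where "c s = (if s \<in> C' \<and> s \<noteq> t then - z s else 0)" for s
      have "\<forall>s\<in>C'-{t}. shear I k t c z s = 0"
        using t C'I by (auto simp: shear_def c_def)
      moreover have "inside I k C (shear I k t c) \<and> inside I k C' (shear I k t c)"
      proof (rule sh[OF t(1)])
        fix s assume s: "s \<in> I" "s \<noteq> t"
        show "int (k s) dvd c s * int (k t)"
        proof (cases "s \<in> C'")
          case True
          have cs: "c s = - z s" using True s by (simp add: c_def)
          have "k s = 2 \<or> (k s = 4 \<and> even (z s))" using notA True k s unfolding k24_def by auto
          then show ?thesis
          proof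
            assume "k s = 2" then show ?thesis using t(2) cs by simp
          next
            assume h: "k s = 4 \<and> even (z s)"
            then obtain m where "z s = 2 * m" by (auto elim: evenE)
            then have "c s * int (k t) = 4 * (- m)" using cs t(2) by simp
            then show ?thesis using h by simp
          qed
        qed (simp add: c_def)
      qed (auto simp: c_def)
      ultimately show ?thesis using t(1) by (intro exI[of _ "shear I k t c"] exI[of _ "{t}"]) auto
    next
      case notB: False
      have ev: "even (z s)" if "s \<in> C'" for s
      proof -
        have sI: "s \<in> I" using that C'I by blast
        show ?thesis
        proof (cases "k s = 4")
          case True then show ?thesis using notA that by blast
        next
          case False
          then have "k s = 2" using k sI unfolding k24_def by auto
          then have "z s = 0 \<or> z s = 1" using zr[OF sI] by auto
          then show ?thesis using notB that \<open>k s = 2\<close> by auto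
        qed
      qed
      show ?thesis
      proof (cases "\<exists>t\<in>C'. z t \<noteq> 0")
        case True
        then obtain t where t: "t \<in> C'" "z t \<noteq> 0" by blast
        have tI: "t \<in> I" using t C'I by blast
        have "k t = 4"
        proof (rule ccontr)
          assume "k t \<noteq> 4"
          then have "k t = 2" using k tI unfolding k24_def by auto
          then show False using zr[OF tI] t ev[OF t(1)] by auto
        qed
        define c where "c s = (if s \<in> C' \<and> s \<noteq> t then - (z s div 2) else 0)" for s
        have zt: "z t = 2"
        proof -
          obtain m where m: "z t = 2 * m" using ev[OF t(1)] by (auto elim: evenE)
          then show ?thesis using zr[OF tI] t \<open>k t = 4\<close> by auto
        qed
        have "\<forall>s\<in>C'-{t}. shear I k t c z s = 0"
        proof
          fix s assume s: "s \<in> C' - {t}"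
          have "z s + - (z s div 2) * 2 = 0" using ev[of s] s by auto
          then show "shear I k t c z s = 0" using s C'I zt by (auto simp: shear_def c_def)
        qed
        moreover have "inside I k C (shear I k t c) \<and> inside I k C' (shear I k t c)"
          by (rule sh[OF t(1)]) (auto simp: c_def \<open>k t = 4\<close> intro!: dvd_mult d4)
        ultimately show ?thesis using t(1) by (intro exI[of _ "shear I k t c"] exI[of _ "{t}"]) auto
      next
        case False
        then show ?thesis by (intro exI[of _ "\<lambda>x. x"] exI[of _ "{}"]) (auto simp: inside_id)
      qed
    qed
  qed
qed

lemma inside_iso: "inside I k C \<theta> \<Longrightarrow> \<theta> \<in> iso (PG I k) (PG I k)"
  unfolding inside_def by (elim conjE)

lemma inside_fix:
  assumes "inside I k C \<theta>" "x \<in> carrier (PG I k)" "\<And>s. s \<in> C \<Longrightarrow> x s = 0"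
  shows "\<theta> x = x"
proof -
  have "\<forall>x\<in>carrier (PG I k). (\<forall>s\<in>C. x s = 0) \<longrightarrow> \<theta> x = x"
    using assms(1) unfolding inside_def by (elim conjE)
  then show ?thesis using assms(2,3) by blast
qed

lemma inside_off: "inside I k C \<theta> \<Longrightarrow> x \<in> carrier (PG I k) \<Longrightarrow> s \<in> I \<Longrightarrow> s \<notin> C \<Longrightarrow> \<theta> x s = x s"
  unfolding inside_def by (elim conjE) auto

lemma NF:
  assumes k: "k24 I k" and fI: "finite I" and CI: "C \<subseteq> I" and fZ: "finite Z"
    and Z: "Z \<subseteq> carrier (PG I k)"
  shows "\<exists>\<theta> U. inside I k C \<theta> \<and> U \<subseteq> C \<and> card U \<le> card Z \<and> (\<forall>z\<in>Z. \<forall>s\<in>C-U. \<theta> z s = 0)"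
  using fZ Z
proof (induction Z rule: finite_induct)
  case empty
  then show ?case by (intro exI[of _ "\<lambda>x. x"] exI[of _ "{}"]) (auto simp: inside_id)
next
  case (insert z F)
  obtain \<theta>0 U0 where h0: "inside I k C \<theta>0" "U0 \<subseteq> C" "card U0 \<le> card F" "\<forall>x\<in>F. \<forall>s\<in>C-U0. \<theta>0 x s = 0"
  proof -
    have "F \<subseteq> carrier (PG I k)" using insert.prems by blast
    then show ?thesis using insert.IH that by blast
  qed
  have i0: "\<theta>0 \<in> iso (PG I k) (PG I k)" using inside_iso[OF h0(1)] .
  have zc: "\<theta>0 z \<in> carrier (PG I k)" using iso_carrier[OF i0] insert.prems by blast
  obtain \<theta>1 U1 where h1: "inside I k C \<theta>1" "inside I k (C - U0) \<theta>1" "U1 \<subseteq> C - U0" "card U1 \<le> 1"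
      "\<forall>s\<in>(C - U0) - U1. \<theta>1 (\<theta>0 z) s = 0"
  proof -
    have "C - U0 \<subseteq> C" by blast
    from NF1[OF k this CI zc] show ?thesis using that by blast
  qed
  show ?case
  proof (intro exI[of _ "\<theta>1 \<circ> \<theta>0"] exI[of _ "U0 \<union> U1"] conjI ballI)
    show "inside I k C (\<theta>1 \<circ> \<theta>0)" using inside_comp[OF h1(1) h0(1)] .
    show "U0 \<union> U1 \<subseteq> C" using h0(2) h1(3) by blast
    have "card (U0 \<union> U1) \<le> card U0 + card U1" by (rule card_Un_le)
    then show "card (U0 \<union> U1) \<le> card (insert z F)" using h0(3) h1(4) insert.hyps by simp
  next
    fix x s assume x: "x \<in> insert z F" and s: "s \<in> C - (U0 \<union> U1)"
    show "(\<theta>1 \<circ> \<theta>0) x s = 0"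
    proof (cases "x = z")
      case True then show ?thesis using h1(5) s by auto
    next
      case False
      then have xF: "x \<in> F" using x by blast
      have xc: "\<theta>0 x \<in> carrier (PG I k)" using iso_carrier[OF i0] insert.prems xF by blast
      have "\<theta>1 (\<theta>0 x) = \<theta>0 x" by (rule inside_fix[OF h1(2) xc]) (use h0(4) xF in blast)
      then show ?thesis using h0(4) xF s by auto
    qed
  qed
qed

lemma tr_hom:
  assumes kG: "kpos IG kG" and kH: "kpos IH kH" and T: "T \<subseteq> IG" and inj: "inj_on \<pi> T"
    and im: "\<pi> ` T \<subseteq> IH" and ty: "\<forall>s\<in>T. kH (\<pi> s) = kG s"
  shows "tr T IH \<pi> \<in> hom (PG IG kG) (PG IH kH)"
proof (rule homI)
  fix x assume x: "x \<in> carrier (PG IG kG)"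
  show "tr T IH \<pi> x \<in> carrier (PG IH kH)"
    unfolding mem_PG[OF kH]
  proof (intro conjI)
    show "\<forall>j\<in>IH. 0 \<le> tr T IH \<pi> x j \<and> tr T IH \<pi> x j < int (kH j)"
    proof
    fix j assume j: "j \<in> IH"
    show "0 \<le> tr T IH \<pi> x j \<and> tr T IH \<pi> x j < int (kH j)"
    proof (cases "j \<in> \<pi> ` T")
      case True
      then obtain s where s: "s \<in> T" "j = \<pi> s" by blast
      have "inv_into T \<pi> j = s" using s inj by simp
      moreover have "s \<in> IG" using s T by blast
      ultimately show ?thesis using x j s ty mem_PG[OF kG] by (auto simp: tr_def)
    next
      case False then show ?thesis using j kH by (auto simp: tr_def kpos_def)
    qed
    qed
  next
    show "\<forall>j. j \<notin> IH \<longrightarrow> tr T IH \<pi> x j = undefined" by (simp add: tr_def)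
  qed
next
  fix x y assume x: "x \<in> carrier (PG IG kG)" and y: "y \<in> carrier (PG IG kG)"
  show "tr T IH \<pi> (x \<otimes>\<^bsub>PG IG kG\<^esub> y) = tr T IH \<pi> x \<otimes>\<^bsub>PG IH kH\<^esub> tr T IH \<pi> y"
  proof
    fix j
    show "tr T IH \<pi> (x \<otimes>\<^bsub>PG IG kG\<^esub> y) j = (tr T IH \<pi> x \<otimes>\<^bsub>PG IH kH\<^esub> tr T IH \<pi> y) j"
    proof (cases "j \<in> IH \<and> j \<in> \<pi> ` T")
      case True
      then obtain s where s: "s \<in> T" "j = \<pi> s" by blast
      have "inv_into T \<pi> j = s" using s inj by simp
      moreover have "s \<in> IG" using s T by blast
      ultimately show ?thesis using True s ty by (simp add: tr_def mult_PG)
    qed (auto simp: tr_def mult_PG)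
  qed
qed

lemma tr_at:
  assumes "inj_on \<pi> T" "s \<in> T" "\<pi> ` T \<subseteq> J"
  shows "tr T J \<pi> x (\<pi> s) = x s"
  using assms by (auto simp: tr_def)

lemma tr_inj:
  assumes kG: "kpos IG kG" and inj: "inj_on \<pi> T" and im: "\<pi> ` T \<subseteq> J"
    and x: "x \<in> carrier (PG IG kG)" and y: "y \<in> carrier (PG IG kG)"
    and x0: "\<forall>s\<in>IG-T. x s = 0" and y0: "\<forall>s\<in>IG-T. y s = 0"
    and e: "tr T J \<pi> x = tr T J \<pi> y"
  shows "x = y"
proof
  fix s
  show "x s = y s"
  proof (cases "s \<in> IG")
    case False then show ?thesis using x y mem_PG[OF kG] by auto
  next
    case True
    show ?thesis
    proof (cases "s \<in> T")
      case True
      then show ?thesis using tr_at[OF inj True im, of x] tr_at[OF inj True im, of y] e by simp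
    next
      case False then show ?thesis using x0 y0 \<open>s \<in> IG\<close> by auto
    qed
  qed
qed

lemma tr_eq:
  assumes UT: "U \<subseteq> T" and inj: "inj_on \<pi>' T" and agree: "\<forall>s\<in>U. \<pi> s = \<pi>' s"
    and x0: "\<forall>s\<in>T-U. x s = 0"
  shows "tr U J \<pi> x = tr T J \<pi>' x"
proof
  fix j
  have imU: "\<pi> ` U = \<pi>' ` U" using agree by (auto simp: image_def)
  have injU: "inj_on \<pi> U" using inj_on_subset[OF inj UT] agree by (simp add: inj_on_def)
  show "tr U J \<pi> x j = tr T J \<pi>' x j"
  proof (cases "j \<in> \<pi>' ` T")
    case True
    then obtain s where s: "s \<in> T" "j = \<pi>' s" by blast
    have i2: "inv_into T \<pi>' j = s" using s inj by simp
    show ?thesis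
    proof (cases "s \<in> U")
      case True
      then have "j = \<pi> s" using s agree by simp
      then have "inv_into U \<pi> j = s" using True injU by simp
      then show ?thesis using i2 True s imU by (simp add: tr_def)
    next
      case False
      have "j \<notin> \<pi> ` U"
      proof
        assume "j \<in> \<pi> ` U"
        then obtain u where u: "u \<in> U" "j = \<pi> u" by blast
        then have "\<pi>' u = \<pi>' s" using s agree by simp
        then have "u = s" using inj u(1) s(1) UT by (meson inj_onD subsetD)
        then show False using u False by simp
      qed
      then show ?thesis using i2 False s x0 by (simp add: tr_def)
    qed
  next
    case False
    then have "j \<notin> \<pi> ` U" using imU UT by blast
    then show ?thesis using False by (simp add: tr_def)
  qed
qed

definition Inv0 :: "nat set \<Rightarrow> (nat \<Rightarrow> nat) \<Rightarrow> nat set \<Rightarrow> (nat \<Rightarrow> nat) \<Rightarrow> nat set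
    \<Rightarrow> (nat \<Rightarrow> nat \<Rightarrow> int) \<Rightarrow> (nat \<Rightarrow> nat \<Rightarrow> int) \<Rightarrow> bool" where
  "Inv0 IG kG IH kH P g h = (\<exists>\<sigma> \<tau> T \<pi>. \<sigma> \<in> iso (PG IG kG) (PG IG kG) \<and> \<tau> \<in> iso (PG IH kH) (PG IH kH)
     \<and> T \<subseteq> IG \<and> inj_on \<pi> T \<and> \<pi> ` T \<subseteq> IH \<and> (\<forall>s\<in>T. kH (\<pi> s) = kG s)
     \<and> (\<forall>i\<in>P. g i \<in> carrier (PG IG kG) \<and> h i \<in> carrier (PG IH kH)
          \<and> (\<forall>s\<in>IG-T. \<sigma> (g i) s = 0) \<and> \<tau> (h i) = tr T IH \<pi> (\<sigma> (g i))))"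

lemma Inv0_mono:
  assumes "Inv0 IG kG IH kH P g h" "P' \<subseteq> P" "\<forall>i\<in>P'. g' i = g i \<and> h' i = h i"
  shows "Inv0 IG kG IH kH P' g' h'"
proof -
  obtain \<sigma> \<tau> T \<pi> where d: "\<sigma> \<in> iso (PG IG kG) (PG IG kG)" "\<tau> \<in> iso (PG IH kH) (PG IH kH)"
     "T \<subseteq> IG" "inj_on \<pi> T" "\<pi> ` T \<subseteq> IH" "\<forall>s\<in>T. kH (\<pi> s) = kG s"
     "\<forall>i\<in>P. g i \<in> carrier (PG IG kG) \<and> h i \<in> carrier (PG IH kH)
          \<and> (\<forall>s\<in>IG-T. \<sigma> (g i) s = 0) \<and> \<tau> (h i) = tr T IH \<pi> (\<sigma> (g i))"
    using assms(1) unfolding Inv0_def by blast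
  have "\<forall>i\<in>P'. g' i \<in> carrier (PG IG kG) \<and> h' i \<in> carrier (PG IH kH)
          \<and> (\<forall>s\<in>IG-T. \<sigma> (g' i) s = 0) \<and> \<tau> (h' i) = tr T IH \<pi> (\<sigma> (g' i))"
    using d(7) assms(2,3) by (metis subsetD)
  then show ?thesis unfolding Inv0_def using d(1-6) by blast
qed

lemma Inv0_sym:
  assumes kG: "kpos IG kG" and inv: "Inv0 IG kG IH kH P g h"
  shows "Inv0 IH kH IG kG P h g"
proof -
  obtain \<sigma> \<tau> T \<pi> where d: "\<sigma> \<in> iso (PG IG kG) (PG IG kG)" "\<tau> \<in> iso (PG IH kH) (PG IH kH)"
     "T \<subseteq> IG" "inj_on \<pi> T" "\<pi> ` T \<subseteq> IH" "\<forall>s\<in>T. kH (\<pi> s) = kG s"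
     "\<forall>i\<in>P. g i \<in> carrier (PG IG kG) \<and> h i \<in> carrier (PG IH kH)
          \<and> (\<forall>s\<in>IG-T. \<sigma> (g i) s = 0) \<and> \<tau> (h i) = tr T IH \<pi> (\<sigma> (g i))"
    using inv unfolding Inv0_def by blast
  define \<rho> where "\<rho> = inv_into T \<pi>"
  have injr: "inj_on \<rho> (\<pi> ` T)" unfolding \<rho>_def by (rule inj_on_inv_into) simp
  have imr: "\<rho> ` \<pi> ` T = T" unfolding \<rho>_def using d(4) by simp
  have rp: "\<And>s. s \<in> T \<Longrightarrow> \<rho> (\<pi> s) = s" unfolding \<rho>_def using d(4) by simp
  have irp: "\<And>s. s \<in> T \<Longrightarrow> inv_into (\<pi> ` T) \<rho> s = \<pi> s"
  proof -
    fix s assume s: "s \<in> T"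
    have "inv_into (\<pi> ` T) \<rho> (\<rho> (\<pi> s)) = \<pi> s" using injr s by (simp add: inv_into_f_f)
    then show "inv_into (\<pi> ` T) \<rho> s = \<pi> s" using rp[OF s] by simp
  qed
  have main: "h i \<in> carrier (PG IH kH) \<and> g i \<in> carrier (PG IG kG)
          \<and> (\<forall>j\<in>IH - \<pi> ` T. \<tau> (h i) j = 0) \<and> \<sigma> (g i) = tr (\<pi> ` T) IG \<rho> (\<tau> (h i))" if i: "i \<in> P" for i
  proof (intro conjI ballI)
    show "h i \<in> carrier (PG IH kH)" "g i \<in> carrier (PG IG kG)" using d(7) i by auto
  next
    fix j assume "j \<in> IH - \<pi> ` T"
    then show "\<tau> (h i) j = 0" using d(7) i by (simp add: tr_def)
  next
    have sc: "\<sigma> (g i) \<in> carrier (PG IG kG)" using iso_carrier[OF d(1)] d(7) i by blast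
    show "\<sigma> (g i) = tr (\<pi> ` T) IG \<rho> (\<tau> (h i))"
    proof
      fix s
      show "\<sigma> (g i) s = tr (\<pi> ` T) IG \<rho> (\<tau> (h i)) s"
      proof (cases "s \<in> IG")
        case False then show ?thesis using sc mem_PG[OF kG] by (simp add: tr_def)
      next
        case sIG: True
        show ?thesis
        proof (cases "s \<in> T")
          case True
          have "tr (\<pi> ` T) IG \<rho> (\<tau> (h i)) s = \<tau> (h i) (\<pi> s)"
            using sIG True imr irp by (simp add: tr_def)
          also have "\<dots> = \<sigma> (g i) s" using d(7) i tr_at[OF d(4) True d(5)] by simp
          finally show ?thesis by simp
        next
          case False
          then show ?thesis using sIG imr d(7) i by (simp add: tr_def)
        qed
      qed
    qed
  qed
  show ?thesis unfolding Inv0_def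
  proof (intro exI conjI)
    show "\<tau> \<in> iso (PG IH kH) (PG IH kH)" "\<sigma> \<in> iso (PG IG kG) (PG IG kG)" using d by auto
    show "\<pi> ` T \<subseteq> IH" using d(5) .
    show "inj_on \<rho> (\<pi> ` T)" using injr .
    show "\<rho> ` \<pi> ` T \<subseteq> IG" using imr d(3) by simp
    show "\<forall>j\<in>\<pi> ` T. kG (\<rho> j) = kH j" using rp d(6) by auto
    show "\<forall>i\<in>P. h i \<in> carrier (PG IH kH) \<and> g i \<in> carrier (PG IG kG) \<and>
        (\<forall>j\<in>IH - \<pi> ` T. \<tau> (h i) j = 0) \<and> \<sigma> (g i) = tr (\<pi> ` T) IG \<rho> (\<tau> (h i))"
      using main by blast
  qed
qed

lemma iso_gen:
  fixes G :: "('a, 'c) monoid_scheme" and H :: "('b, 'd) monoid_scheme" and f :: "'a \<Rightarrow> 'b"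
  assumes gh: "group_hom G H f" and Xs: "Xs \<subseteq> carrier G" and inj: "inj_on f (generate G Xs)"
  shows "f \<in> iso (subgroup_generated G Xs) (subgroup_generated H (f ` Xs))"
proof (rule isoI)
  show "f \<in> hom (subgroup_generated G Xs) (subgroup_generated H (f ` Xs))"
    using group_hom.hom_between_subgroups[OF gh, of Xs "f ` Xs"] by simp
  have c: "carrier (subgroup_generated G Xs) = generate G Xs"
    using Xs by (simp add: carrier_subgroup_generated Int_absorb1)
  have "carrier (subgroup_generated H (f ` Xs)) = f ` carrier (subgroup_generated G Xs)"
    using group_hom.subgroup_generated_by_image[OF gh Xs] .
  then show "bij_betw f (carrier (subgroup_generated G Xs)) (carrier (subgroup_generated H (f ` Xs)))"
    using inj c by (simp add: bij_betw_def)
qed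

lemma one_PG: "\<one>\<^bsub>PG I k\<^esub> = (\<lambda>i\<in>I. 0)"
  by (simp add: PG_def)

lemma inv_PG:
  assumes "kpos I k" "x \<in> carrier (PG I k)"
  shows "inv\<^bsub>PG I k\<^esub> x = (\<lambda>i\<in>I. (- x i) mod int (k i))"
proof -
  have "inv\<^bsub>PG I k\<^esub> x = (\<lambda>i\<in>I. inv\<^bsub>integer_mod_group (k i)\<^esub> x i)"
    using assms(2) unfolding PG_def by (intro inv_product_group) auto
  also have "\<dots> = (\<lambda>i\<in>I. (- x i) mod int (k i))"
  proof (rule restrict_ext)
    fix i assume i: "i \<in> I"
    have "x i \<in> carrier (integer_mod_group (k i))"
      using assms(2) i unfolding PG_def by auto
    then show "inv\<^bsub>integer_mod_group (k i)\<^esub> x i = (- x i) mod int (k i)" by simp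
  qed
  finally show ?thesis .
qed

lemma Inv0_piso:
  assumes kG: "kpos IG kG" and kH: "kpos IH kH" and inv: "Inv0 IG kG IH kH P g h"
  shows "\<exists>f. f \<in> iso (subgroup_generated (PG IG kG) (g ` P)) (subgroup_generated (PG IH kH) (h ` P))
            \<and> (\<forall>i\<in>P. f (g i) = h i)"
proof -
  obtain \<sigma> \<tau> T \<pi> where d: "\<sigma> \<in> iso (PG IG kG) (PG IG kG)" "\<tau> \<in> iso (PG IH kH) (PG IH kH)"
     "T \<subseteq> IG" "inj_on \<pi> T" "\<pi> ` T \<subseteq> IH" "\<forall>s\<in>T. kH (\<pi> s) = kG s"
     "\<forall>i\<in>P. g i \<in> carrier (PG IG kG) \<and> h i \<in> carrier (PG IH kH)
          \<and> (\<forall>s\<in>IG-T. \<sigma> (g i) s = 0) \<and> \<tau> (h i) = tr T IH \<pi> (\<sigma> (g i))"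
    using inv unfolding Inv0_def by blast
  let ?G = "PG IG kG" and ?H = "PG IH kH"
  define \<tau>' where "\<tau>' = inv_into (carrier ?H) \<tau>"
  have ti: "\<tau>' \<in> iso ?H ?H" unfolding \<tau>'_def using group.iso_set_sym[OF group_PG d(2)] .
  define \<Phi> where "\<Phi> = \<tau>' \<circ> (tr T IH \<pi> \<circ> \<sigma>)"
  have sh: "\<sigma> \<in> hom ?G ?G" using d(1) by (simp add: iso_def)
  have trh: "tr T IH \<pi> \<in> hom ?G ?H" using tr_hom[OF kG kH d(3-6)] .
  have th: "\<tau>' \<in> hom ?H ?H" using ti by (simp add: iso_def)
  have Ph: "\<Phi> \<in> hom ?G ?H" unfolding \<Phi>_def
    by (rule hom_compose[OF hom_compose[OF sh trh] th])
  have ghP: "group_hom ?G ?H \<Phi>" unfolding group_hom_def group_hom_axioms_def using group_PG Ph by blast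
  have ghs: "group_hom ?G ?G \<sigma>" unfolding group_hom_def group_hom_axioms_def using group_PG sh by blast
  define M where "M = {x \<in> carrier ?G. \<forall>s\<in>IG-T. \<sigma> x s = 0}"
  have Xs: "g ` P \<subseteq> carrier ?G" using d(7) by auto
  have genM: "generate ?G (g ` P) \<subseteq> M"
  proof
    fix x assume "x \<in> generate ?G (g ` P)"
    then show "x \<in> M"
    proof (induction x rule: generate.induct)
      case one
      have "\<sigma> \<one>\<^bsub>?G\<^esub> = \<one>\<^bsub>?G\<^esub>" using group_hom.hom_one[OF ghs] .
      have oc: "\<one>\<^bsub>?G\<^esub> \<in> carrier ?G" using monoid.one_closed[OF group.is_monoid[OF group_PG]] .
      have "\<forall>s\<in>IG-T. \<sigma> \<one>\<^bsub>?G\<^esub> s = 0"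
      proof
        fix s assume "s \<in> IG - T"
        then show "\<sigma> \<one>\<^bsub>?G\<^esub> s = 0" unfolding \<open>\<sigma> \<one>\<^bsub>?G\<^esub> = \<one>\<^bsub>?G\<^esub>\<close> by (simp add: one_PG)
      qed
      then show ?case unfolding M_def using oc by blast
    next
      case (incl y)
      then show ?case unfolding M_def using d(7) by auto
    next
      case (inv y)
      then have yc: "y \<in> carrier ?G" and y0: "\<forall>s\<in>IG-T. \<sigma> y s = 0" using d(7) by auto
      have "\<sigma> (inv\<^bsub>?G\<^esub> y) = inv\<^bsub>?G\<^esub> (\<sigma> y)" using group_hom.hom_inv[OF ghs yc] .
      also have "\<dots> = (\<lambda>i\<in>IG. (- \<sigma> y i) mod int (kG i))"
        using inv_PG[OF kG] iso_carrier[OF d(1) yc] by blast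
      finally show ?case unfolding M_def using y0 group.inv_closed[OF group_PG yc] by simp
    next
      case (eng a b)
      then have ac: "a \<in> carrier ?G" "b \<in> carrier ?G" unfolding M_def by auto
      have "\<sigma> (a \<otimes>\<^bsub>?G\<^esub> b) = \<sigma> a \<otimes>\<^bsub>?G\<^esub> \<sigma> b" using group_hom.hom_mult[OF ghs ac] .
      have "\<forall>s\<in>IG-T. \<sigma> (a \<otimes>\<^bsub>?G\<^esub> b) s = 0"
      proof
        fix s assume s: "s \<in> IG - T"
        have "(\<sigma> a \<otimes>\<^bsub>?G\<^esub> \<sigma> b) s = (\<sigma> a s + \<sigma> b s) mod int (kG s)" using s by (simp add: mult_PG)
        then show "\<sigma> (a \<otimes>\<^bsub>?G\<^esub> b) s = 0" using \<open>\<sigma> (a \<otimes>\<^bsub>?G\<^esub> b) = \<sigma> a \<otimes>\<^bsub>?G\<^esub> \<sigma> b\<close> eng s unfolding M_def by simp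
      qed
      then show ?case using monoid.m_closed[OF group.is_monoid[OF group_PG] ac] unfolding M_def by blast
    qed
  qed
  have injM: "inj_on \<Phi> M"
  proof (rule inj_onI)
    fix x y assume x: "x \<in> M" and y: "y \<in> M" and e: "\<Phi> x = \<Phi> y"
    have xc: "x \<in> carrier ?G" and yc: "y \<in> carrier ?G" using x y unfolding M_def by auto
    have sx: "\<sigma> x \<in> carrier ?G" "\<sigma> y \<in> carrier ?G" using iso_carrier[OF d(1)] xc yc by auto
    have tx: "tr T IH \<pi> (\<sigma> x) \<in> carrier ?H" "tr T IH \<pi> (\<sigma> y) \<in> carrier ?H"
      using hom_in_carrier[OF trh] sx by auto
    have "inj_on \<tau>' (carrier ?H)" using ti by (simp add: iso_def bij_betw_def)
    then have "tr T IH \<pi> (\<sigma> x) = tr T IH \<pi> (\<sigma> y)" using e tx unfolding \<Phi>_def by (auto dest: inj_onD)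
    then have "\<sigma> x = \<sigma> y" using tr_inj[OF kG d(4) d(5) sx] x y unfolding M_def by blast
    moreover have "inj_on \<sigma> (carrier ?G)" using d(1) by (simp add: iso_def bij_betw_def)
    ultimately show "x = y" using xc yc by (auto dest: inj_onD)
  qed
  have Pg: "\<Phi> (g i) = h i" if "i \<in> P" for i
  proof -
    have "inj_on \<tau> (carrier ?H)" using d(2) by (simp add: iso_def bij_betw_def)
    moreover have "h i \<in> carrier ?H" "tr T IH \<pi> (\<sigma> (g i)) = \<tau> (h i)" using d(7) that by auto
    ultimately show ?thesis unfolding \<Phi>_def \<tau>'_def by (simp add: inv_into_f_f)
  qed
  have im: "\<Phi> ` g ` P = h ` P" using Pg by (auto simp: image_def)
  have "\<Phi> \<in> iso (subgroup_generated ?G (g ` P)) (subgroup_generated ?H (\<Phi> ` g ` P))"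
    by (rule iso_gen[OF ghP Xs inj_on_subset[OF injM genM]])
  then show ?thesis using im Pg by (intro exI[of _ \<Phi>]) simp
qed

lemma room:
  assumes fU: "finite U" and fU0: "finite U0" and fIH: "finite IH" and disj: "U0 \<inter> U = {}"
    and inj: "inj_on \<pi> U0" and im: "\<pi> ` U0 \<subseteq> IH" and ty: "\<forall>s\<in>U0. kH (\<pi> s) = kG s"
    and cm: "card (U0 \<union> U) \<le> m" and rm: "\<forall>s\<in>U. m \<le> card {j\<in>IH. kH j = kG s}"
  shows "\<exists>\<pi>2. (\<forall>s\<in>U0. \<pi>2 s = \<pi> s) \<and> inj_on \<pi>2 (U0 \<union> U) \<and> \<pi>2 ` (U0 \<union> U) \<subseteq> IH
            \<and> (\<forall>s\<in>U0 \<union> U. kH (\<pi>2 s) = kG s)"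
proof -
  define A where "A v = {s\<in>U. kG s = v}" for v
  define B where "B v = {j\<in>IH. kH j = v} - \<pi> ` U0" for v
  have "\<forall>v. \<exists>f. f ` A v \<subseteq> B v \<and> inj_on f (A v)"
  proof
    fix v
    show "\<exists>f. f ` A v \<subseteq> B v \<and> inj_on f (A v)"
    proof (cases "A v = {}")
      case True then show ?thesis by auto
    next
      case False
      then obtain s0 where s0: "s0 \<in> U" "kG s0 = v" unfolding A_def by auto
      let ?W = "{s\<in>U0. kG s = v}" and ?N = "{j\<in>IH. kH j = v}"
      have fA: "finite (A v)" unfolding A_def using fU by simp
      have fW: "finite ?W" using fU0 by simp
      have fN: "finite ?N" using fIH by simp
      have "card (A v \<union> ?W) = card (A v) + card ?W"
        by (rule card_Un_disjoint[OF fA fW]) (use disj in \<open>auto simp: A_def\<close>)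
      moreover have "card (A v \<union> ?W) \<le> card (U0 \<union> U)"
        by (rule card_mono) (use fU fU0 in \<open>auto simp: A_def\<close>)
      ultimately have c1: "card (A v) + card ?W \<le> m" using cm by simp
      have sub: "?N \<inter> \<pi> ` U0 \<subseteq> \<pi> ` ?W" using ty by auto
      have "card (?N \<inter> \<pi> ` U0) \<le> card (\<pi> ` ?W)"
        by (rule card_mono[OF _ sub]) (use fW in simp)
      also have "\<dots> \<le> card ?W" by (rule card_image_le[OF fW])
      finally have c2: "card (?N \<inter> \<pi> ` U0) \<le> card ?W" .
      have c3: "card (B v) = card ?N - card (?N \<inter> \<pi> ` U0)"
        unfolding B_def by (rule card_Diff_subset_Int) (use fN in simp)
      have c4: "m \<le> card ?N" using rm s0 by auto
      have "card (A v) \<le> card (B v)" using c1 c2 c3 c4 by arith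
      moreover have "finite (B v)" unfolding B_def using fN by simp
      ultimately show ?thesis using card_le_inj[OF fA] by blast
    qed
  qed
  then obtain F where F: "\<And>v. F v ` A v \<subseteq> B v" "\<And>v. inj_on (F v) (A v)" by metis
  define \<pi>2 where "\<pi>2 s = (if s \<in> U0 then \<pi> s else F (kG s) s)" for s
  have newp: "\<pi>2 s \<in> IH \<and> kH (\<pi>2 s) = kG s \<and> \<pi>2 s \<notin> \<pi> ` U0" if "s \<in> U" for s
  proof -
    have "s \<notin> U0" using that disj by blast
    moreover have "s \<in> A (kG s)" using that unfolding A_def by simp
    ultimately show ?thesis using F(1)[of "kG s"] unfolding \<pi>2_def B_def by auto
  qed
  show ?thesis
  proof (intro exI[of _ \<pi>2] conjI ballI)
    show "\<pi>2 s = \<pi> s" if "s \<in> U0" for s using that by (simp add: \<pi>2_def)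
    show "\<pi>2 ` (U0 \<union> U) \<subseteq> IH"
    proof
      fix y assume "y \<in> \<pi>2 ` (U0 \<union> U)"
      then obtain s where s: "s \<in> U0 \<union> U" "y = \<pi>2 s" by blast
      show "y \<in> IH"
      proof (cases "s \<in> U0")
        case True then show ?thesis using s im by (auto simp: \<pi>2_def)
      next
        case False then show ?thesis using s newp[of s] by blast
      qed
    qed
    show "kH (\<pi>2 s) = kG s" if "s \<in> U0 \<union> U" for s
    proof (cases "s \<in> U0")
      case True then show ?thesis using ty by (simp add: \<pi>2_def)
    next
      case False then show ?thesis using that newp[of s] by blast
    qed
    show "inj_on \<pi>2 (U0 \<union> U)"
    proof (rule inj_onI)
      fix a b assume a: "a \<in> U0 \<union> U" and b: "b \<in> U0 \<union> U" and e: "\<pi>2 a = \<pi>2 b"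
      show "a = b"
      proof (cases "a \<in> U0")
        case aU0: True
        show ?thesis
        proof (cases "b \<in> U0")
          case True then show ?thesis using aU0 e inj by (simp add: \<pi>2_def inj_on_def)
        next
          case False
          have bU: "b \<in> U" using b False by blast
          have "\<pi>2 a \<in> \<pi> ` U0" using aU0 by (simp add: \<pi>2_def)
          then show ?thesis using newp[OF bU] e by simp
        qed
      next
        case aU: False
        then have aU': "a \<in> U" using a by blast
        show ?thesis
        proof (cases "b \<in> U0")
          case True
          have "\<pi>2 b \<in> \<pi> ` U0" using True by (simp add: \<pi>2_def)
          then show ?thesis using newp[OF aU'] e by simp
        next
          case False
          then have bU: "b \<in> U" using b by blast
          have "kG a = kG b" using newp[OF aU'] newp[OF bU] e by simp
          moreover have "a \<in> A (kG a)" "b \<in> A (kG b)" using aU' bU unfolding A_def by auto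
          ultimately show ?thesis using F(2)[of "kG a"] e aU False unfolding \<pi>2_def
            by (simp add: inj_on_def)
        qed
      qed
    qed
  qed
qed

lemma inside_mirror:
  assumes "inside I k C \<theta>" "inj_on \<pi> C" "\<pi> ` C \<subseteq> J" "\<forall>s\<in>C. k' (\<pi> s) = k s" "kpos J k'"
  shows "\<exists>\<theta>'. \<theta>' \<in> iso (PG J k') (PG J k') \<and> (\<forall>x\<in>carrier (PG I k). \<theta>' (tr C J \<pi> x) = tr C J \<pi> (\<theta> x))"
proof -
  have "\<forall>J k' \<pi>. inj_on \<pi> C \<and> \<pi> ` C \<subseteq> J \<and> (\<forall>s\<in>C. k' (\<pi> s) = k s) \<and> kpos J k' \<longrightarrow>
          (\<exists>\<theta>'. \<theta>' \<in> iso (PG J k') (PG J k') \<and> (\<forall>x\<in>carrier (PG I k). \<theta>' (tr C J \<pi> x) = tr C J \<pi> (\<theta> x)))"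
    using assms(1) unfolding inside_def by (elim conjE)
  then have "inj_on \<pi> C \<and> \<pi> ` C \<subseteq> J \<and> (\<forall>s\<in>C. k' (\<pi> s) = k s) \<and> kpos J k' \<longrightarrow>
          (\<exists>\<theta>'. \<theta>' \<in> iso (PG J k') (PG J k') \<and> (\<forall>x\<in>carrier (PG I k). \<theta>' (tr C J \<pi> x) = tr C J \<pi> (\<theta> x)))"
    by (elim allE)
  then show ?thesis using assms(2-5) by blast
qed

lemma ext_step:
  assumes kG: "k24 IG kG" and kH: "k24 IH kH" and fIG: "finite IG" and fIH: "finite IH"
    and inv: "Inv0 IG kG IH kH P0 g h" and fP0: "finite P0" and fD: "finite D" and disj: "P0 \<inter> D = {}"
    and cm: "card P0 + card D \<le> m" and rm: "\<forall>s\<in>IG. m \<le> card {j\<in>IH. kH j = kG s}"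
    and z: "\<forall>i\<in>D. z i \<in> carrier (PG IG kG)"
  shows "\<exists>w. (\<forall>i\<in>D. w i \<in> carrier (PG IH kH)) \<and>
     Inv0 IG kG IH kH (P0 \<union> D) (\<lambda>i. if i \<in> D then z i else g i) (\<lambda>i. if i \<in> D then w i else h i)"
proof -
  let ?G = "PG IG kG" and ?H = "PG IH kH"
  have kpG: "kpos IG kG" and kpH: "kpos IH kH" using k24_kpos kG kH by auto
  obtain \<sigma> \<tau> T \<pi> where d: "\<sigma> \<in> iso ?G ?G" "\<tau> \<in> iso ?H ?H"
     "T \<subseteq> IG" "inj_on \<pi> T" "\<pi> ` T \<subseteq> IH" "\<forall>s\<in>T. kH (\<pi> s) = kG s"
     "\<forall>i\<in>P0. g i \<in> carrier ?G \<and> h i \<in> carrier ?H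
          \<and> (\<forall>s\<in>IG-T. \<sigma> (g i) s = 0) \<and> \<tau> (h i) = tr T IH \<pi> (\<sigma> (g i))"
    using inv unfolding Inv0_def by blast
  have gc: "\<And>i. i \<in> P0 \<Longrightarrow> \<sigma> (g i) \<in> carrier ?G" using d(7) iso_carrier[OF d(1)] by blast
  define Z0 where "Z0 = (\<lambda>i. \<sigma> (g i)) ` P0"
  have Z0c: "Z0 \<subseteq> carrier ?G" unfolding Z0_def using gc by blast
  have fZ0: "finite Z0" unfolding Z0_def using fP0 by simp
  obtain \<theta> U0 where nf0: "inside IG kG T \<theta>" "U0 \<subseteq> T" "card U0 \<le> card Z0"
      "\<forall>x\<in>Z0. \<forall>s\<in>T-U0. \<theta> x s = 0"
    using NF[OF kG fIG d(3) fZ0 Z0c] by blast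
  have cU0: "card U0 \<le> card P0"
    using nf0(3) card_image_le[OF fP0, of "\<lambda>i. \<sigma> (g i)"] unfolding Z0_def by linarith
  obtain \<theta>' where th': "\<theta>' \<in> iso ?H ?H" "\<forall>x\<in>carrier ?G. \<theta>' (tr T IH \<pi> x) = tr T IH \<pi> (\<theta> x)"
    using inside_mirror[OF nf0(1) d(4) d(5) d(6) kpH] by blast
  have thi: "\<theta> \<in> iso ?G ?G" using inside_iso[OF nf0(1)] .
  define \<sigma>1 where "\<sigma>1 = \<theta> \<circ> \<sigma>"
  define \<tau>1 where "\<tau>1 = \<theta>' \<circ> \<tau>"
  have s1i: "\<sigma>1 \<in> iso ?G ?G" unfolding \<sigma>1_def using iso_set_trans[OF d(1) thi] .
  have t1i: "\<tau>1 \<in> iso ?H ?H" unfolding \<tau>1_def using iso_set_trans[OF d(2) th'(1)] .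
  have U0IG: "U0 \<subseteq> IG" using nf0(2) d(3) by blast
  have injU0: "inj_on \<pi> U0" using inj_on_subset[OF d(4) nf0(2)] .
  have imU0: "\<pi> ` U0 \<subseteq> IH" using d(5) nf0(2) by blast
  have tyU0: "\<forall>s\<in>U0. kH (\<pi> s) = kG s" using d(6) nf0(2) by blast
  have old1: "\<sigma>1 (g i) \<in> carrier ?G \<and> (\<forall>s\<in>IG-U0. \<sigma>1 (g i) s = 0) \<and> \<tau>1 (h i) = tr U0 IH \<pi> (\<sigma>1 (g i))"
    if i: "i \<in> P0" for i
  proof (intro conjI ballI)
    show c: "\<sigma>1 (g i) \<in> carrier ?G" unfolding \<sigma>1_def using iso_carrier[OF thi gc[OF i]] by simp
    have z0: "\<forall>s\<in>T-U0. \<theta> (\<sigma> (g i)) s = 0" using nf0(4) i unfolding Z0_def by blast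
    show zz: "\<sigma>1 (g i) s = 0" if s: "s \<in> IG - U0" for s
    proof (cases "s \<in> T")
      case True then show ?thesis using z0 s unfolding \<sigma>1_def by simp
    next
      case False
      have "\<theta> (\<sigma> (g i)) s = \<sigma> (g i) s" using inside_off[OF nf0(1) gc[OF i], of s] s False by blast
      then show ?thesis using d(7) i s False unfolding \<sigma>1_def by simp
    qed
    have "\<tau>1 (h i) = \<theta>' (tr T IH \<pi> (\<sigma> (g i)))" using d(7) i unfolding \<tau>1_def by simp
    also have "\<dots> = tr T IH \<pi> (\<sigma>1 (g i))" using th'(2) gc[OF i] unfolding \<sigma>1_def by simp
    also have "\<dots> = tr U0 IH \<pi> (\<sigma>1 (g i))"
      by (rule tr_eq[symmetric, OF nf0(2) d(4)]) (use zz d(3) in auto)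
    finally show "\<tau>1 (h i) = tr U0 IH \<pi> (\<sigma>1 (g i))" .
  qed
  have zc1: "\<And>i. i \<in> D \<Longrightarrow> \<sigma>1 (z i) \<in> carrier ?G" using z iso_carrier[OF s1i] by blast
  define Z1 where "Z1 = (\<lambda>i. \<sigma>1 (z i)) ` D"
  have Z1c: "Z1 \<subseteq> carrier ?G" unfolding Z1_def using zc1 by blast
  have fZ1: "finite Z1" unfolding Z1_def using fD by simp
  have CIG: "IG - U0 \<subseteq> IG" by blast
  obtain \<theta>2 U where nf1: "inside IG kG (IG - U0) \<theta>2" "U \<subseteq> IG - U0" "card U \<le> card Z1"
      "\<forall>x\<in>Z1. \<forall>s\<in>(IG - U0)-U. \<theta>2 x s = 0"
    using NF[OF kG fIG CIG fZ1 Z1c] by blast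
  have cU: "card U \<le> card D"
    using nf1(3) card_image_le[OF fD, of "\<lambda>i. \<sigma>1 (z i)"] unfolding Z1_def by linarith
  have th2i: "\<theta>2 \<in> iso ?G ?G" using inside_iso[OF nf1(1)] .
  define \<sigma>2 where "\<sigma>2 = \<theta>2 \<circ> \<sigma>1"
  have s2i: "\<sigma>2 \<in> iso ?G ?G" unfolding \<sigma>2_def using iso_set_trans[OF s1i th2i] .
  have fU: "finite U" using nf1(2) fIG finite_subset by blast
  have fU0: "finite U0" using U0IG fIG finite_subset by blast
  have dj: "U0 \<inter> U = {}" using nf1(2) by blast
  have "card (U0 \<union> U) \<le> card U0 + card U" by (rule card_Un_le)
  then have cmU: "card (U0 \<union> U) \<le> m" using cU0 cU cm by linarith
  have rmU: "\<forall>s\<in>U. m \<le> card {j\<in>IH. kH j = kG s}" using rm nf1(2) by blast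
  obtain \<pi>2 where r: "\<forall>s\<in>U0. \<pi>2 s = \<pi> s" "inj_on \<pi>2 (U0 \<union> U)" "\<pi>2 ` (U0 \<union> U) \<subseteq> IH"
      "\<forall>s\<in>U0 \<union> U. kH (\<pi>2 s) = kG s"
    using room[OF fU fU0 fIH dj injU0 imU0 tyU0 cmU rmU] by blast
  let ?T2 = "U0 \<union> U"
  have T2IG: "?T2 \<subseteq> IG" using U0IG nf1(2) by blast
  have trh: "tr ?T2 IH \<pi>2 \<in> hom ?G ?H" using tr_hom[OF kpG kpH T2IG r(2) r(3) r(4)] .
  define \<tau>1' where "\<tau>1' = inv_into (carrier ?H) \<tau>1"
  have t1'i: "\<tau>1' \<in> iso ?H ?H" unfolding \<tau>1'_def using group.iso_set_sym[OF group_PG t1i] .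
  define w where "w i = \<tau>1' (tr ?T2 IH \<pi>2 (\<sigma>2 (z i)))" for i
  have trc: "\<And>i. i \<in> D \<Longrightarrow> tr ?T2 IH \<pi>2 (\<sigma>2 (z i)) \<in> carrier ?H"
    using hom_in_carrier[OF trh] iso_carrier[OF s2i] z by blast
  have wc: "\<And>i. i \<in> D \<Longrightarrow> w i \<in> carrier ?H" unfolding w_def using iso_carrier[OF t1'i] trc by blast
  have tw: "\<And>i. i \<in> D \<Longrightarrow> \<tau>1 (w i) = tr ?T2 IH \<pi>2 (\<sigma>2 (z i))"
  proof -
    fix i assume i: "i \<in> D"
    have "bij_betw \<tau>1 (carrier ?H) (carrier ?H)" using t1i by (simp add: iso_def)
    then have "\<tau>1 ` carrier ?H = carrier ?H" by (simp add: bij_betw_def)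
    then show "\<tau>1 (w i) = tr ?T2 IH \<pi>2 (\<sigma>2 (z i))"
      unfolding w_def \<tau>1'_def using trc[OF i] by (simp add: f_inv_into_f)
  qed
  have newz: "\<forall>s\<in>IG - ?T2. \<sigma>2 (z i) s = 0" if i: "i \<in> D" for i
  proof
    fix s assume s: "s \<in> IG - ?T2"
    have "\<sigma>1 (z i) \<in> Z1" unfolding Z1_def using i by blast
    then show "\<sigma>2 (z i) s = 0" using nf1(4) s unfolding \<sigma>2_def by auto
  qed
  have oldg: "\<sigma>2 (g i) = \<sigma>1 (g i)" if i: "i \<in> P0" for i
    unfolding \<sigma>2_def using inside_fix[OF nf1(1)] old1[OF i] by simp
  show ?thesis
  proof (intro exI[of _ w] conjI)
    show "\<forall>i\<in>D. w i \<in> carrier ?H" using wc by blast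
    show "Inv0 IG kG IH kH (P0 \<union> D) (\<lambda>i. if i \<in> D then z i else g i) (\<lambda>i. if i \<in> D then w i else h i)"
      unfolding Inv0_def
    proof (intro exI conjI)
      show "\<sigma>2 \<in> iso ?G ?G" using s2i .
      show "\<tau>1 \<in> iso ?H ?H" using t1i .
      show "?T2 \<subseteq> IG" using T2IG .
      show "inj_on \<pi>2 ?T2" "\<pi>2 ` ?T2 \<subseteq> IH" using r by auto
      show "\<forall>s\<in>?T2. kH (\<pi>2 s) = kG s" using r by auto
    next
      show "\<forall>i\<in>P0 \<union> D. (if i \<in> D then z i else g i) \<in> carrier ?G \<and> (if i \<in> D then w i else h i) \<in> carrier ?H
        \<and> (\<forall>s\<in>IG - ?T2. \<sigma>2 (if i \<in> D then z i else g i) s = 0)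
        \<and> \<tau>1 (if i \<in> D then w i else h i) = tr ?T2 IH \<pi>2 (\<sigma>2 (if i \<in> D then z i else g i))"
      proof (rule ballI)
      fix i assume i: "i \<in> P0 \<union> D"
      show "(if i \<in> D then z i else g i) \<in> carrier ?G \<and> (if i \<in> D then w i else h i) \<in> carrier ?H
        \<and> (\<forall>s\<in>IG - ?T2. \<sigma>2 (if i \<in> D then z i else g i) s = 0)
        \<and> \<tau>1 (if i \<in> D then w i else h i) = tr ?T2 IH \<pi>2 (\<sigma>2 (if i \<in> D then z i else g i))"
      proof (intro conjI)
      show "(if i \<in> D then z i else g i) \<in> carrier ?G" using i z d(7) by auto
      show "(if i \<in> D then w i else h i) \<in> carrier ?H" using i wc d(7) by auto
      show "\<forall>s\<in>IG - ?T2. \<sigma>2 (if i \<in> D then z i else g i) s = 0"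
      proof (cases "i \<in> D")
        case True then show ?thesis using newz by simp
      next
        case False
        then have iP: "i \<in> P0" using i by blast
        then show ?thesis using False oldg[OF iP] old1[OF iP] by auto
      qed
      show "\<tau>1 (if i \<in> D then w i else h i) = tr ?T2 IH \<pi>2 (\<sigma>2 (if i \<in> D then z i else g i))"
      proof (cases "i \<in> D")
        case True then show ?thesis using tw by simp
      next
        case False
        then have iP: "i \<in> P0" using i by blast
        have "\<tau>1 (h i) = tr U0 IH \<pi> (\<sigma>1 (g i))" using old1[OF iP] by blast
        also have "\<dots> = tr ?T2 IH \<pi>2 (\<sigma>1 (g i))"
          by (rule tr_eq[OF _ r(2)]) (use r(1) old1[OF iP] T2IG in auto)
        finally show ?thesis using False oldg[OF iP] by simp
      qed
      qed
      qed
    qed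
  qed
qed

definition posS :: "nat set \<Rightarrow> (nat \<Rightarrow> nat) \<Rightarrow> nat set \<Rightarrow> (nat \<Rightarrow> nat) \<Rightarrow> nat \<Rightarrow> (nat \<Rightarrow> int, nat \<Rightarrow> int) pebble_pos set" where
  "posS IG kG IH kH m = {p. (\<forall>i. p i \<noteq> None \<longrightarrow> i < m) \<and>
      Inv0 IG kG IH kH {i. p i \<noteq> None} (\<lambda>i. fst (the (p i))) (\<lambda>i. snd (the (p i)))}"

lemma game:
  assumes kG: "k24 IG kG" and kH: "k24 IH kH" and fIG: "finite IG" and fIH: "finite IH"
    and rm1: "\<forall>s\<in>IG. m \<le> card {j\<in>IH. kH j = kG s}"
    and rm2: "\<forall>s\<in>IH. m \<le> card {j\<in>IG. kG j = kH s}"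
  shows "(\<lambda>_. None) \<in> posS IG kG IH kH m \<and> dup_invariant q m (PG IG kG) (PG IH kH) (posS IG kG IH kH m)"
proof
  let ?G = "PG IG kG" and ?H = "PG IH kH"
  have kpG: "kpos IG kG" and kpH: "kpos IH kH" using k24_kpos kG kH by auto
  show "(\<lambda>_. None) \<in> posS IG kG IH kH m"
    unfolding posS_def Inv0_def
    by (auto intro!: exI[of _ "\<lambda>x. x"] exI[of _ "{}"] iso_set_refl)
  show "dup_invariant q m ?G ?H (posS IG kG IH kH m)"
    unfolding dup_invariant_def
  proof (intro ballI allI impI conjI)
    fix p D
    assume pS: "p \<in> posS IG kG IH kH m" and Dh: "D \<subseteq> {..<m} \<and> 1 \<le> card D \<and> card D \<le> q"
    define P where "P = {i. p i \<noteq> None}"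
    define gp where "gp i = fst (the (p i))" for i
    define hp where "hp i = snd (the (p i))" for i
    have Pm: "P \<subseteq> {..<m}" using pS unfolding posS_def P_def by auto
    have invP: "Inv0 IG kG IH kH P gp hp" using pS unfolding posS_def P_def gp_def hp_def by auto
    have DM: "D \<subseteq> {..<m}" using Dh by blast
    have fD: "finite D" using DM finite_subset by blast
    define P0 where "P0 = P - D"
    have fP0: "finite P0" unfolding P0_def using Pm finite_subset by blast
    have inv0: "Inv0 IG kG IH kH P0 gp hp" using Inv0_mono[OF invP] unfolding P0_def by blast
    have dj: "P0 \<inter> D = {}" unfolding P0_def by blast
    have "card (P0 \<union> D) = card P0 + card D" by (rule card_Un_disjoint[OF fP0 fD dj])
    moreover have "card (P0 \<union> D) \<le> m" using card_mono[of "{..<m}" "P0 \<union> D"] Pm DM unfolding P0_def by auto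
    ultimately have cm: "card P0 + card D \<le> m" by simp
    have plset: "{i. place p D a b i \<noteq> None} = P0 \<union> D" for a b
      unfolding place_def P0_def P_def by auto
    have plS: "place p D a b \<in> posS IG kG IH kH m"
      if "Inv0 IG kG IH kH (P0 \<union> D) (\<lambda>i. if i \<in> D then a i else gp i) (\<lambda>i. if i \<in> D then b i else hp i)" for a b
      unfolding posS_def
    proof (intro CollectI conjI allI impI)
      fix i assume "place p D a b i \<noteq> None"
      then have "i \<in> P0 \<union> D" using plset by blast
      then show "i < m" using Pm DM unfolding P0_def by auto
    next
      show "Inv0 IG kG IH kH {i. place p D a b i \<noteq> None} (\<lambda>i. fst (the (place p D a b i))) (\<lambda>i. snd (the (place p D a b i)))"
        unfolding plset by (rule Inv0_mono[OF that]) (auto simp: place_def gp_def hp_def)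
    qed
    show "pebble_partial_iso ?G ?H (pick_up p D)"
    proof -
      have s: "{i. pick_up p D i \<noteq> None} = P0" unfolding pick_up_def P0_def P_def by auto
      have "Inv0 IG kG IH kH P0 (\<lambda>i. fst (the (pick_up p D i))) (\<lambda>i. snd (the (pick_up p D i)))"
        by (rule Inv0_mono[OF inv0]) (auto simp: pick_up_def gp_def hp_def P0_def)
      from Inv0_piso[OF kpG kpH this] show ?thesis unfolding pebble_partial_iso_def Let_def s .
    qed
    show "\<exists>b. (\<forall>i\<in>D. b i \<in> carrier ?H) \<and> place p D a b \<in> posS IG kG IH kH m"
      if a: "\<forall>i\<in>D. a i \<in> carrier ?G" for a
    proof -
      obtain w where w: "\<forall>i\<in>D. w i \<in> carrier ?H"
        "Inv0 IG kG IH kH (P0 \<union> D) (\<lambda>i. if i \<in> D then a i else gp i) (\<lambda>i. if i \<in> D then w i else hp i)"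
        using ext_step[OF kG kH fIG fIH inv0 fP0 fD dj cm rm1 a] by blast
      then show ?thesis using plS by blast
    qed
    show "\<exists>a. (\<forall>i\<in>D. a i \<in> carrier ?G) \<and> place p D a b \<in> posS IG kG IH kH m"
      if b: "\<forall>i\<in>D. b i \<in> carrier ?H" for b
    proof -
      have inv0': "Inv0 IH kH IG kG P0 hp gp" using Inv0_sym[OF kpG inv0] .
      obtain w where w: "\<forall>i\<in>D. w i \<in> carrier ?G"
        "Inv0 IH kH IG kG (P0 \<union> D) (\<lambda>i. if i \<in> D then b i else hp i) (\<lambda>i. if i \<in> D then w i else gp i)"
        using ext_step[OF kH kG fIH fIG inv0' fP0 fD dj cm rm2 b] by blast
      have "Inv0 IG kG IH kH (P0 \<union> D) (\<lambda>i. if i \<in> D then w i else gp i) (\<lambda>i. if i \<in> D then b i else hp i)"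
        using Inv0_sym[OF kpH w(2)] .
      then show ?thesis using plS w(1) by blast
    qed
  qed
qed

definition kk :: "nat \<Rightarrow> nat \<Rightarrow> nat" where "kk a i = (if i < a then 2 else 4)"

lemma Z2Z4_PG: "Z2Z4_group a b = PG {..<a+b} (kk a)"
  by (simp add: Z2Z4_group_def PG_def kk_def)

lemma k24_kk: "k24 {..<a+b} (kk a)" by (simp add: k24_def kk_def)

lemma cnt2: "{j\<in>{..<a+b}. kk a j = 2} = {..<a}" by (auto simp: kk_def)
lemma cnt4: "{j\<in>{..<a+b}. kk a j = 4} = {a..<a+b}" by (auto simp: kk_def)

lemma room_kk:
  assumes "m \<le> a'" "m \<le> b'"
  shows "\<forall>s\<in>{..<a+b}. m \<le> card {j\<in>{..<a'+b'}. kk a' j = kk a s}"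
proof
  fix s assume "s \<in> {..<a+b}"
  show "m \<le> card {j\<in>{..<a'+b'}. kk a' j = kk a s}"
  proof (cases "s < a")
    case True then show ?thesis using assms cnt2[of a' b'] by (simp add: kk_def)
  next
    case False then show ?thesis using assms cnt4[of a' b'] by (simp add: kk_def)
  qed
qed

lemma card_Z: "card (carrier (Z2Z4_group a b)) = 2 ^ a * 4 ^ b"
proof -
  have kp: "kpos {..<a+b} (kk a)" by (simp add: kpos_def kk_def)
  have "card (carrier (Z2Z4_group a b)) = (\<Prod>i\<in>{..<a+b}. card {0..<int (kk a i)})"
    unfolding Z2Z4_PG carrier_PG[OF kp] by (simp add: card_PiE)
  also have "\<dots> = (\<Prod>i\<in>{..<a+b}. kk a i)" by simp
  also have "\<dots> = (\<Prod>i\<in>{..<a}. kk a i) * (\<Prod>i\<in>{a..<a+b}. kk a i)"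
  proof -
    have "{..<a+b} = {..<a} \<union> {a..<a+b}" by auto
    moreover have "prod (kk a) ({..<a} \<union> {a..<a+b}) = prod (kk a) {..<a} * prod (kk a) {a..<a+b}"
      by (rule prod.union_disjoint) auto
    ultimately show ?thesis by simp
  qed
  also have "\<dots> = (\<Prod>i\<in>{..<a}. 2) * (\<Prod>i\<in>{a..<a+b}. 4)"
    by (simp add: kk_def)
  also have "\<dots> = 2 ^ a * 4 ^ b" by simp
  finally show ?thesis .
qed

theorem theorem1p3:
  fixes q n :: nat
  assumes "q \<ge> 1" and "n \<ge> 5"
  shows "duplicator_wins q (q * n div 4)
           (Z2Z4_group (q * n) (q * n))
           (Z2Z4_group (q * (n - 2)) (q * (n + 1)))"
proof -
  let ?m = "q * n div 4"
  obtain n' where n': "n = n' + 5" using assms(2) by (metis le_add_diff_inverse2)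
  have cardeq: "card (carrier (Z2Z4_group (q * n) (q * n))) = card (carrier (Z2Z4_group (q * (n - 2)) (q * (n + 1))))"
  proof -
    have p4: "(4::nat) ^ k = 2 ^ (2 * k)" for k by (simp add: power_mult)
    have e: "q * n + 2 * (q * n) = q * (n - 2) + 2 * (q * (n + 1))" unfolding n' by (simp add: algebra_simps)
    show ?thesis unfolding card_Z p4 by (simp only: power_add[symmetric] e)
  qed
  have mle: "?m \<le> x" if "q * n \<le> 4 * x" for x
  proof -
    have "?m \<le> (4 * x) div 4" using div_le_mono[OF that] .
    then show ?thesis by simp
  qed
  have m1: "?m \<le> q * (n - 2)" by (rule mle) (use n' in \<open>simp add: algebra_simps\<close>)
  have m2: "?m \<le> q * (n + 1)" by (rule mle) (use n' in \<open>simp add: algebra_simps\<close>)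
  have m3: "?m \<le> q * n" by (rule mle) (use n' in \<open>simp add: algebra_simps\<close>)
  have g: "(\<lambda>_. None) \<in> posS {..<q * n + q * n} (kk (q * n)) {..<q * (n - 2) + q * (n + 1)} (kk (q * (n - 2))) ?m \<and>
    dup_invariant q ?m (PG {..<q * n + q * n} (kk (q * n))) (PG {..<q * (n - 2) + q * (n + 1)} (kk (q * (n - 2))))
      (posS {..<q * n + q * n} (kk (q * n)) {..<q * (n - 2) + q * (n + 1)} (kk (q * (n - 2))) ?m)"
    by (rule game[OF k24_kk k24_kk finite_lessThan finite_lessThan room_kk[OF m1 m2] room_kk[OF m3 m3]])
  show ?thesis
    unfolding duplicator_wins_def using cardeq g unfolding Z2Z4_PG by blast
qed

end
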